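(* Let $g(\cdot)$ be a (parameterized) feature encoder mapping sequences to $\mathbb{R}^d$ and let $T_1,\dots,T_K:\mathbb{R}^d\to\mathbb{R}^d$ be (parameterized) transformation networks, and consider the contextual discriminative contrastive loss $\mathcal{L}_{\text{cdcl}}=\mathcal{L}_{\text{cncl}}+\mathcal{L}_{\text{dcl}}$ defined in the context. If there exists a choice of parameters for $g$ and $T_1,\dots,T_K$ such that $\mathcal{L}_{\text{cdcl}}<K\log K$, then for any nonzero $c\in\mathbb{R}^d$, the constant parameter setting in which $T_k(g(x))=g(x)=c$ for all inputs $x$ and all $k=1,\dots,K$ is not an optimal solution for minimizing $\mathcal{L}_{\text{cdcl}}$.
   Context: A multivariate time series $X\in\mathbb{R}^{N\times T}$ is given; $X_{\cdot,i}\in\mathbb{R}^N$ is its value at time $i$. The training set $\mathcal{D}$ consists of windows $X^t=\{X_{\cdot,i}\}_{i=t-w+1}^{t}$ extracted with stride 1, each split into a context sequence $C^t=\{X_{\cdot,i}\}_{i=t-w+1}^{t-p}$ and a suspect sequence $S^t=\{X_{\cdot,i}\}_{i=t-c}^{t}$ of equal length (here $p$ and the sequence length are hyperparameters). Set $O^t=g(S^t)$, $G^t=g(C^t)$, and $O^{t,k}=T_k(O^t)$ for $k=1,\dots,K$. For a temperature $\tau>0$ define $h(a,b)=\exp\!\big(\mathrm{sim}(a,b)/\tau\big)$, where $\mathrm{sim}(a,b)=\frac{a^\top b}{\|a\|_2\|b\|_2}$ is cosine similarity. The losses are $$\mathcal{L}_{\text{dcl}}=-\mathbb{E}_{X^t\sim\mathcal{D}}\sum_{k=1}^K\log\frac{h(O^t,O^{t,k})}{h(O^t,O^{t,k})+\sum_{l\neq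 k}h(O^{t,k},O^{t,l})},\qquad \mathcal{L}_{\text{cncl}}=\mathbb{E}_{X^t\sim\mathcal{D}}\sum_{k=1}^K\|O^{t,k}-G^t\|_2^2,$$ and $\mathcal{L}_{\text{cdcl}}=\mathcal{L}_{\text{cncl}}+\mathcal{L}_{\text{dcl}}$. *)

theory Defs
  imports "HOL-Analysis.Analysis"
begin

definition cos_sim :: "real^'d \<Rightarrow> real^'d \<Rightarrow> real" where
  "cos_sim a b = (a \<bullet> b) / (norm a * norm b)"

definition hsim :: "real \<Rightarrow> real^'d \<Rightarrow> real^'d \<Rightarrow> real" where
  "hsim \<tau> a b = exp (cos_sim a b / \<tau>)"

text \<open>Time series X : time index i (1..T) to R^N. Context sequence C^t = X_{t-w+1..t-p},
  suspect sequence S^t = X_{t-c..t}, both as lists of column vectors.\<close>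
definition context_seq :: "(nat \<Rightarrow> real^'N) \<Rightarrow> nat \<Rightarrow> nat \<Rightarrow> nat \<Rightarrow> (real^'N) list" where
  "context_seq X w p t = map X [t + 1 - w ..< t - p + 1]"

definition suspect_seq :: "(nat \<Rightarrow> real^'N) \<Rightarrow> nat \<Rightarrow> nat \<Rightarrow> (real^'N) list" where
  "suspect_seq X c t = map X [t - c ..< t + 1]"

text \<open>Window end times of the stride-1 training set: t = w, ..., T.\<close>
definition windows :: "nat \<Rightarrow> nat \<Rightarrow> nat set" where
  "windows w Tlen = {w..Tlen}"

definition dcl_window ::
  "real \<Rightarrow> nat \<Rightarrow> ((real^'N) list \<Rightarrow> real^'d) \<Rightarrow> (nat \<Rightarrow> real^'d \<Rightarrow> real^'d)
     \<Rightarrow> (real^'N) list \<Rightarrow> real" where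
  "dcl_window \<tau> K g T S =
     (let ov = g S in
      - (\<Sum>k=1..K. ln (hsim \<tau> ov (T k ov) /
            (hsim \<tau> ov (T k ov) + (\<Sum>l\<in>{1..K} - {k}. hsim \<tau> (T k ov) (T l ov))))))"

definition cncl_window ::
  "nat \<Rightarrow> ((real^'N) list \<Rightarrow> real^'d) \<Rightarrow> (nat \<Rightarrow> real^'d \<Rightarrow> real^'d)
     \<Rightarrow> (real^'N) list \<Rightarrow> (real^'N) list \<Rightarrow> real" where
  "cncl_window K g T S C = (\<Sum>k=1..K. (norm (T k (g S) - g C))\<^sup>2)"

text \<open>Expectation over the (uniform, finite) training set of windows.\<close>
definition L_dcl where
  "L_dcl \<tau> K X w p c Tlen g T =
     (\<Sum>t\<in>windows w Tlen. dcl_window \<tau> K g T (suspect_seq X c t)) / real (card (windows w Tlen))"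

definition L_cncl where
  "L_cncl K X w p c Tlen g T =
     (\<Sum>t\<in>windows w Tlen. cncl_window K g T (suspect_seq X c t) (context_seq X w p t))
       / real (card (windows w Tlen))"

definition L_cdcl where
  "L_cdcl \<tau> K X w p c Tlen g T = L_cncl K X w p c Tlen g T + L_dcl \<tau> K X w p c Tlen g T"

end

theory Submission
  imports Defs
begin

theorem proposition2:
  fixes X :: "nat \<Rightarrow> real^'N"
    and Tlen w p c K :: nat
    and \<tau> :: real
    and \<Theta> :: "'q set"
    and enc :: "'q \<Rightarrow> (real^'N) list \<Rightarrow> real^'d"
    and trans :: "'q \<Rightarrow> nat \<Rightarrow> real^'d \<Rightarrow> real^'d"
    and \<theta>0 :: 'q
    and v :: "real^'d"
  assumes tau: "\<tau> > 0"
    and hyp: "1 \<le> w" "p < w" "w \<le> Tlen" "w - p = c + 1"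
    and ex_good: "\<exists>\<theta>\<in>\<Theta>. L_cdcl \<tau> K X w p c Tlen (enc \<theta>) (trans \<theta>) < real K * ln (real K)"
    and v_nz: "v \<noteq> 0"
    and th0: "\<theta>0 \<in> \<Theta>"
    and const_g: "\<forall>x. enc \<theta>0 x = v"
    and const_T: "\<forall>k\<in>{1..K}. \<forall>x. trans \<theta>0 k (enc \<theta>0 x) = v"
  shows "\<not> (\<forall>\<theta>\<in>\<Theta>. L_cdcl \<tau> K X w p c Tlen (enc \<theta>0) (trans \<theta>0)
                      \<le> L_cdcl \<tau> K X w p c Tlen (enc \<theta>) (trans \<theta>))"
proof
  assume opt: "\<forall>\<theta>\<in>\<Theta>. L_cdcl \<tau> K X w p c Tlen (enc \<theta>0) (trans \<theta>0)
                      \<le> L_cdcl \<tau> K X w p c Tlen (enc \<theta>) (trans \<theta>)"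
  have Tv: "\<And>k. k \<in> {1..K} \<Longrightarrow> trans \<theta>0 k v = v" using const_T const_g by metis
  have cs: "cos_sim v v = 1" using v_nz
    by (simp add: cos_sim_def power2_norm_eq_inner[symmetric] power2_eq_square)
  define e where "e = hsim \<tau> v v"
  have epos: "e > 0" unfolding e_def hsim_def by simp
  have trm: "ln (hsim \<tau> v (trans \<theta>0 k v) /
            (hsim \<tau> v (trans \<theta>0 k v) + (\<Sum>l\<in>{1..K} - {k}. hsim \<tau> (trans \<theta>0 k v) (trans \<theta>0 l v))))
        = - ln (real K)" if k: "k \<in> {1..K}" for k
  proof -
    have "(\<Sum>l\<in>{1..K} - {k}. hsim \<tau> (trans \<theta>0 k v) (trans \<theta>0 l v)) = (\<Sum>l\<in>{1..K} - {k}. e)"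
      using Tv k by (intro sum.cong) (auto simp: e_def)
    also have "\<dots> = real (K - 1) * e" using k by simp
    finally have s: "(\<Sum>l\<in>{1..K} - {k}. hsim \<tau> (trans \<theta>0 k v) (trans \<theta>0 l v)) = real (K - 1) * e" .
    have K1: "K \<ge> 1" using k by simp
    have "e + real (K - 1) * e = real K * e" using K1 by (simp add: of_nat_diff algebra_simps)
    then have "e / (e + real (K - 1) * e) = 1 / real K" using epos K1 by simp
    then show ?thesis using Tv[OF k] s K1 by (simp add: e_def ln_div)
  qed
  have dw: "dcl_window \<tau> K (enc \<theta>0) (trans \<theta>0) S = real K * ln (real K)" for S
  proof -
    have g: "enc \<theta>0 S = v" using const_g by simp
    have "dcl_window \<tau> K (enc \<theta>0) (trans \<theta>0) S = - (\<Sum>k=1..K. - ln (real K))"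
      unfolding dcl_window_def Let_def g by (intro arg_cong[where f=uminus] sum.cong refl trm) 
    then show ?thesis by simp
  qed
  have cw: "cncl_window K (enc \<theta>0) (trans \<theta>0) S C = 0" for S C
    unfolding cncl_window_def using Tv const_g by simp
  have cardpos: "card (windows w Tlen) > 0" using hyp by (simp add: windows_def)
  have L0: "L_cdcl \<tau> K X w p c Tlen (enc \<theta>0) (trans \<theta>0) = real K * ln (real K)"
    unfolding L_cdcl_def L_cncl_def L_dcl_def using cardpos by (simp add: dw cw)
  from ex_good obtain \<theta> where "\<theta> \<in> \<Theta>" "L_cdcl \<tau> K X w p c Tlen (enc \<theta>) (trans \<theta>) < real K * ln (real K)" by blast
  with opt L0 show False by fastforce
qed

end
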